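(* Let $\mathbf A$ be a finite simple algebra of type 2 (affine type) whose traces have cardinality a power of the prime $p$. Then there is an integer $k$ depending only on $\mathbf A$ such that for every program $(t,\iota,S)$ over $\mathbf A$ of length $l$, there is a $\mathrm{BOUND}_k\circ\mathrm{MOD}_p$ circuit of size $O(l)$ computing the same Boolean function as $(t,\iota,S)$.
   Context: A finite algebra has finite universe and finitely many basic operations; it is simple if its only congruences are the trivial ones; its type is the tame congruence theory type of its unique prime quotient $0\prec 1$. An $n$-ary circuit over $\mathbf A$ is a DAG with one output node, sources labelled by variables $x_1,\dots,x_n$ or constants, gates labelled by basic operations; its size (length) is nodes plus edges. A program $(t,\iota,S)$ over $\mathbf A$ consists of an $n$-ary circuit $t$, $\iota:\{0,1\}\to A$ and $S\subseteq A$; it computes $b\mapsto 1$ iff $t(\iota(b_1),\dots,\iota(b_n))\in S$; its length is the size of $t$. A $\mathrm{MOD}_p$ gate with accepting set $T\subseteq\mathbb Z_p$ has unbounded fan-in and outputs 1 iff the sum of its Boolean inputs modulo $p$ is in $T$. A $\mathrm{BOUND}_k$ gate has at most $k$ inputs and computes an arbitrary Boolean function of them. A $\mathrm{BOUND}_k\circ\mathrm{MOD}_p$ circuit is a single $\mathrm{BOUND}_k$ gate whose inputs are $\mathrm{MOD}_p$ gates reading the input bits; its size is the number of edges plus gates. *)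

theory Defs
  imports "HOL-Computational_Algebra.Primes" "HOL-Algebra.Ring"
begin

text \<open>A finite algebra is represented by a finite type 'a (its universe is UNIV)
  together with a finite list F of basic operations, each given as a pair
  (arity, operation on argument lists).\<close>

type_synonym 'a ops = "(nat \<times> ('a list \<Rightarrow> 'a)) list"

definition congruence :: "'a ops \<Rightarrow> ('a \<times> 'a) set \<Rightarrow> bool" where
  "congruence F \<theta> \<longleftrightarrow> equiv UNIV \<theta> \<and>
     (\<forall>(n, f) \<in> set F. \<forall>xs ys. length xs = n \<and> length ys = n \<and>
        list_all2 (\<lambda>x y. (x, y) \<in> \<theta>) xs ys \<longrightarrow> (f xs, f ys) \<in> \<theta>)"

definition simple_alg :: "('a::finite) ops \<Rightarrow> bool" where
  "simple_alg F \<longleftrightarrow> card (UNIV :: 'a set) \<ge> 2 \<and>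
     (\<forall>\<theta>. congruence F \<theta> \<longrightarrow> \<theta> = Id \<or> \<theta> = UNIV)"

datatype 'a pterm = PVar nat | PConst 'a | PApp nat "'a pterm list"

fun wf_pterm :: "'a ops \<Rightarrow> nat \<Rightarrow> 'a pterm \<Rightarrow> bool" where
  "wf_pterm F n (PVar i) = (i < n)"
| "wf_pterm F n (PConst c) = True"
| "wf_pterm F n (PApp j ts) =
     (j < length F \<and> length ts = fst (F ! j) \<and> (\<forall>t\<in>set ts. wf_pterm F n t))"

fun peval :: "'a ops \<Rightarrow> (nat \<Rightarrow> 'a) \<Rightarrow> 'a pterm \<Rightarrow> 'a" where
  "peval F e (PVar i) = e i"
| "peval F e (PConst c) = c"
| "peval F e (PApp j ts) = snd (F ! j) (map (peval F e) ts)"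

definition is_pol :: "'a ops \<Rightarrow> nat \<Rightarrow> ('a list \<Rightarrow> 'a) \<Rightarrow> bool" where
  "is_pol F n f \<longleftrightarrow> (\<exists>t. wf_pterm F n t \<and>
     (\<forall>xs. length xs = n \<longrightarrow> f xs = peval F (\<lambda>i. xs ! i) t))"

definition is_upol :: "'a ops \<Rightarrow> ('a \<Rightarrow> 'a) \<Rightarrow> bool" where
  "is_upol F f \<longleftrightarrow> (\<exists>t. wf_pterm F 1 t \<and> (\<forall>a. f a = peval F (\<lambda>_. a) t))"

text \<open>(0,1)-minimal sets: minimal sets f(A), f a unary polynomial with f(1) not in 0,
  i.e. f not constant.\<close>
definition min_set :: "('a::finite) ops \<Rightarrow> 'a set \<Rightarrow> bool" where
  "min_set F U \<longleftrightarrow>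
     (\<exists>f. is_upol F f \<and> (\<exists>a b. f a \<noteq> f b) \<and> U = range f) \<and>
     (\<forall>g. is_upol F g \<and> (\<exists>a b. g a \<noteq> g b) \<and> range g \<subseteq> U \<longrightarrow> range g = U)"

text \<open>(0,1)-traces: sets U \<inter> B with U a (0,1)-minimal set and B a block of the
  congruence 1 such that U \<inter> B is not contained in a block of 0.\<close>
definition is_trace :: "('a::finite) ops \<Rightarrow> 'a set \<Rightarrow> bool" where
  "is_trace F N \<longleftrightarrow> (\<exists>U B. min_set F U \<and> B \<in> UNIV // (UNIV :: ('a \<times> 'a) set) \<and>
     N = U \<inter> B \<and> \<not> (N \<times> N \<subseteq> Id))"

text \<open>The induced algebra on N (all polynomial operations of A under which N is closed,
  restricted to N) is polynomially equivalent to a one-dimensional vector space over a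
  (finite) field with universe N: its n-ary polynomial operations are exactly the
  affine maps c + \<Sum> lam_i x_i.\<close>
definition induced_vector_space :: "'a ops \<Rightarrow> 'a set \<Rightarrow> bool" where
  "induced_vector_space F N \<longleftrightarrow> (\<exists>R :: 'a ring. field R \<and> carrier R = N \<and>
     (\<forall>n (g :: 'a list \<Rightarrow> 'a).
        (\<exists>f. is_pol F n f \<and> (\<forall>xs. length xs = n \<and> set xs \<subseteq> N \<longrightarrow> f xs \<in> N) \<and>
             (\<forall>xs. length xs = n \<and> set xs \<subseteq> N \<longrightarrow> g xs = f xs))
        \<longleftrightarrow>
        (\<exists>c \<in> N. \<exists>lam. (\<forall>i<n. lam i \<in> N) \<and>
             (\<forall>xs. length xs = n \<and> set xs \<subseteq> N \<longrightarrow>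
                g xs = c \<oplus>\<^bsub>R\<^esub> (\<Oplus>\<^bsub>R\<^esub>i\<in>{..<n}. lam i \<otimes>\<^bsub>R\<^esub> xs ! i)))))"

definition tct_type2 :: "('a::finite) ops \<Rightarrow> bool" where
  "tct_type2 F \<longleftrightarrow> (\<forall>N. is_trace F N \<longrightarrow> induced_vector_space F N)"

datatype 'a gate = GIn nat | GConst 'a | GOp nat "nat list"

text \<open>A circuit is a topologically sorted list of nodes; arguments refer to earlier
  nodes; the output is the last node.\<close>
definition wf_circuit :: "'a ops \<Rightarrow> nat \<Rightarrow> 'a gate list \<Rightarrow> bool" where
  "wf_circuit F n gs \<longleftrightarrow> gs \<noteq> [] \<and> (\<forall>k < length gs. case gs ! k of
       GIn i \<Rightarrow> i < n
     | GConst c \<Rightarrow> True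
     | GOp j args \<Rightarrow> j < length F \<and> length args = fst (F ! j) \<and> (\<forall>a\<in>set args. a < k))"

fun gate_val :: "'a ops \<Rightarrow> (nat \<Rightarrow> 'a) \<Rightarrow> 'a list \<Rightarrow> 'a gate \<Rightarrow> 'a" where
  "gate_val F x vs (GIn i) = x i"
| "gate_val F x vs (GConst c) = c"
| "gate_val F x vs (GOp j args) = snd (F ! j) (map (\<lambda>a. vs ! a) args)"

fun eval_gates :: "'a ops \<Rightarrow> (nat \<Rightarrow> 'a) \<Rightarrow> 'a list \<Rightarrow> 'a gate list \<Rightarrow> 'a list" where
  "eval_gates F x vs [] = vs"
| "eval_gates F x vs (g # gs) = eval_gates F x (vs @ [gate_val F x vs g]) gs"

definition circuit_val :: "'a ops \<Rightarrow> 'a gate list \<Rightarrow> (nat \<Rightarrow> 'a) \<Rightarrow> 'a" where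
  "circuit_val F gs x = last (eval_gates F x [] gs)"

fun gate_indeg :: "'a gate \<Rightarrow> nat" where
  "gate_indeg (GOp j args) = length args"
| "gate_indeg _ = 0"

definition circuit_size :: "'a gate list \<Rightarrow> nat" where
  "circuit_size gs = length gs + sum_list (map gate_indeg gs)"

definition program_val :: "'a ops \<Rightarrow> 'a gate list \<Rightarrow> (bool \<Rightarrow> 'a) \<Rightarrow> 'a set \<Rightarrow> (nat \<Rightarrow> bool) \<Rightarrow> bool" where
  "program_val F gs \<iota> S b \<longleftrightarrow> circuit_val F gs (\<lambda>i. \<iota> (b i)) \<in> S"

text \<open>A MOD_p gate: (set of input bits it reads, accepting set T \<subseteq> Z_p = {0..<p}).
  A BOUND o MOD circuit: list of MOD gates and a Boolean function g of their outputs.\<close>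
definition mod_gate_val :: "nat \<Rightarrow> nat set \<times> nat set \<Rightarrow> (nat \<Rightarrow> bool) \<Rightarrow> bool" where
  "mod_gate_val p G b \<longleftrightarrow> card {i \<in> fst G. b i} mod p \<in> snd G"

definition bm_val :: "nat \<Rightarrow> (nat set \<times> nat set) list \<Rightarrow> (bool list \<Rightarrow> bool) \<Rightarrow> (nat \<Rightarrow> bool) \<Rightarrow> bool" where
  "bm_val p M g b = g (map (\<lambda>G. mod_gate_val p G b) M)"

definition bm_wf :: "nat \<Rightarrow> nat \<Rightarrow> nat \<Rightarrow> (nat set \<times> nat set) list \<Rightarrow> bool" where
  "bm_wf k p n M \<longleftrightarrow> length M \<le> k \<and> (\<forall>G\<in>set M. fst G \<subseteq> {..<n} \<and> snd G \<subseteq> {..<p})"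

text \<open>Size = edges (input wires into MOD gates, MOD gates into the BOUND gate) plus
  gates (the MOD gates and the BOUND gate).\<close>
definition bm_size :: "(nat set \<times> nat set) list \<Rightarrow> nat" where
  "bm_size M = sum_list (map (\<lambda>G. card (fst G)) M) + length M + length M + 1"

end

theory Submission
  imports Defs
begin


fun psubst :: "(nat \<Rightarrow> 'a pterm) \<Rightarrow> 'a pterm \<Rightarrow> 'a pterm" where
  "psubst s (PVar i) = s i"
| "psubst s (PConst c) = PConst c"
| "psubst s (PApp j ts) = PApp j (map (psubst s) ts)"

lemma peval_psubst: "peval F e (psubst s t) = peval F (\<lambda>i. peval F e (s i)) t"
  by (induction t) (auto cong: map_cong)

lemma wf_psubst: "wf_pterm F n t \<Longrightarrow> (\<And>i. i < n \<Longrightarrow> wf_pterm F m (s i)) \<Longrightarrow> wf_pterm F m (psubst s t)"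
  by (induction t) auto

lemma wf_mono: "wf_pterm F n t \<Longrightarrow> n \<le> m \<Longrightarrow> wf_pterm F m t"
  by (induction t) auto

lemma peval_dep: "wf_pterm F n t \<Longrightarrow> (\<And>i. i < n \<Longrightarrow> e i = e' i) \<Longrightarrow> peval F e t = peval F e' t"
  by (induction t) (auto cong: map_cong)

section \<open>Circuits to terms\<close>

fun gate_tm :: "'a pterm list \<Rightarrow> 'a gate \<Rightarrow> 'a pterm" where
  "gate_tm ts (GIn i) = PVar i"
| "gate_tm ts (GConst c) = PConst c"
| "gate_tm ts (GOp j args) = PApp j (map (\<lambda>a. ts ! a) args)"

fun tm_gates :: "'a pterm list \<Rightarrow> 'a gate list \<Rightarrow> 'a pterm list" where
  "tm_gates ts [] = ts"
| "tm_gates ts (g # gs) = tm_gates (ts @ [gate_tm ts g]) gs"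

definition gok :: "'a ops \<Rightarrow> nat \<Rightarrow> nat \<Rightarrow> 'a gate \<Rightarrow> bool" where
  "gok F n k g \<longleftrightarrow> (case g of GIn i \<Rightarrow> i < n | GConst c \<Rightarrow> True
     | GOp j args \<Rightarrow> j < length F \<and> length args = fst (F ! j) \<and> (\<forall>a\<in>set args. a < k))"

lemma tm_gates_correct:
  "length ts = length vs \<Longrightarrow> (\<forall>k<length vs. vs ! k = peval F x (ts ! k) \<and> wf_pterm F n (ts ! k))
   \<Longrightarrow> (\<forall>k<length gs. gok F n (length vs + k) (gs ! k))
   \<Longrightarrow> length (tm_gates ts gs) = length (eval_gates F x vs gs) \<and>
       (\<forall>k<length (eval_gates F x vs gs). eval_gates F x vs gs ! k = peval F x (tm_gates ts gs ! k)
          \<and> wf_pterm F n (tm_gates ts gs ! k))"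
proof (induction gs arbitrary: ts vs)
  case Nil
  then show ?case by simp
next
  case (Cons g gs)
  have g: "gok F n (length vs) g" using Cons.prems(3)[rule_format, of 0] by simp
  have A: "gate_val F x vs g = peval F x (gate_tm ts g) \<and> wf_pterm F n (gate_tm ts g)"
    using g Cons.prems(1,2) by (cases g) (auto simp: gok_def cong: map_cong)
  have "length (ts @ [gate_tm ts g]) = length (vs @ [gate_val F x vs g])" using Cons.prems by simp
  moreover have "\<forall>k<length (vs @ [gate_val F x vs g]). (vs @ [gate_val F x vs g]) ! k = peval F x ((ts @ [gate_tm ts g]) ! k)
      \<and> wf_pterm F n ((ts @ [gate_tm ts g]) ! k)"
    using Cons.prems(1,2) A by (auto simp: nth_append)
  moreover have "\<forall>k<length gs. gok F n (length (vs @ [gate_val F x vs g]) + k) (gs ! k)"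
  proof (intro allI impI)
    fix k assume "k < length gs"
    then show "gok F n (length (vs @ [gate_val F x vs g]) + k) (gs ! k)"
      using Cons.prems(3)[rule_format, of "Suc k"] by simp
  qed
  ultimately have IH: "length (tm_gates (ts @ [gate_tm ts g]) gs) = length (eval_gates F x (vs @ [gate_val F x vs g]) gs) \<and>
       (\<forall>k<length (eval_gates F x (vs @ [gate_val F x vs g]) gs). eval_gates F x (vs @ [gate_val F x vs g]) gs ! k = peval F x (tm_gates (ts @ [gate_tm ts g]) gs ! k)
          \<and> wf_pterm F n (tm_gates (ts @ [gate_tm ts g]) gs ! k))"
    by (rule Cons.IH)
  show ?case unfolding tm_gates.simps eval_gates.simps by (rule IH)
qed

lemma circuit_term:
  assumes "wf_circuit F n gs"
  shows "\<exists>t. wf_pterm F n t \<and> (\<forall>x. circuit_val F gs x = peval F x t)"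
proof -
  have ok0: "\<forall>k<length gs. gok F n k (gs ! k)"
    using assms unfolding wf_circuit_def gok_def by simp
  then have ok: "\<forall>k<length gs. gok F n (length [] + k) (gs ! k)" by simp
  have ne: "gs \<noteq> []" using assms unfolding wf_circuit_def by simp
  have len: "\<And>x. length (eval_gates F x [] gs) = length gs"
  proof -
    have "\<And>vs x. length (eval_gates F x vs gs) = length vs + length gs"
      by (induction gs) auto
    then show "\<And>x. length (eval_gates F x [] gs) = length gs" by simp
  qed
  have lt: "\<And>ts. length (tm_gates ts gs) = length ts + length gs"
    by (induction gs) auto
  define t where "t = last (tm_gates [] gs)"
  have "\<And>x. circuit_val F gs x = peval F x t \<and> wf_pterm F n t"
  proof -
    fix x
    have C: "\<forall>k<length (eval_gates F x [] gs). eval_gates F x [] gs ! k = peval F x (tm_gates [] gs ! k)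
          \<and> wf_pterm F n (tm_gates [] gs ! k)"
      using tm_gates_correct[of "[]" "[]" F x n gs] ok by simp
    have "length gs - 1 < length (eval_gates F x [] gs)" using ne len by simp
    then have C1: "eval_gates F x [] gs ! (length gs - 1) = peval F x (tm_gates [] gs ! (length gs - 1))
          \<and> wf_pterm F n (tm_gates [] gs ! (length gs - 1))" using C by blast
    have ne2: "eval_gates F x [] gs \<noteq> []" "tm_gates [] gs \<noteq> []" using len[of x] lt[of "[]"] ne by auto
    show "circuit_val F gs x = peval F x t \<and> wf_pterm F n t"
      using C1 ne2 len lt[of "[]"] unfolding circuit_val_def t_def
      by (simp add: last_conv_nth)
  qed
  then show ?thesis by blast
qed

lemma eval_gates_dep:
  "(\<And>i. GIn i \<in> set gs \<Longrightarrow> x i = x' i) \<Longrightarrow> eval_gates F x vs gs = eval_gates F x' vs gs"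
proof (induction gs arbitrary: vs)
  case Nil then show ?case by simp
next
  case (Cons g gs)
  have "gate_val F x vs g = gate_val F x' vs g" using Cons.prems by (cases g) auto
  then show ?case using Cons by simp
qed

lemma circuit_dep:
  "(\<And>i. GIn i \<in> set gs \<Longrightarrow> x i = x' i) \<Longrightarrow> circuit_val F gs x = circuit_val F gs x'"
  unfolding circuit_val_def using eval_gates_dep by metis



lemma list_all2_nthD: "list_all2 P xs ys \<Longrightarrow> k < length xs \<Longrightarrow> P (xs ! k) (ys ! k)"
  by (simp add: list_all2_conv_all_nth)

lemma unary_closed_congruence_aux:
  assumes eq: "equiv UNIV \<theta>"
    and cl: "\<And>T x y. wf_pterm F 1 T \<Longrightarrow> (x, y) \<in> \<theta> \<Longrightarrow> (peval F (\<lambda>_. x) T, peval F (\<lambda>_. y) T) \<in> \<theta>"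
    and nf: "(n, f) \<in> set F" and lx: "length xs = n" and ly: "length ys = n"
    and rel: "list_all2 (\<lambda>x y. (x, y) \<in> \<theta>) xs ys"
  shows "(f xs, f ys) \<in> \<theta>"
proof -
  obtain j where j: "j < length F" "F ! j = (n, f)" using nf by (metis in_set_conv_nth)
  have trans: "\<And>a b c. (a, b) \<in> \<theta> \<Longrightarrow> (b, c) \<in> \<theta> \<Longrightarrow> (a, c) \<in> \<theta>"
    using eq unfolding equiv_def trans_def by blast
  have refl: "\<And>a. (a, a) \<in> \<theta>" using eq unfolding equiv_def refl_on_def by blast
  define zs where "zs k = take k ys @ drop k xs" for k
  have lz: "length (zs k) = n" for k using lx ly unfolding zs_def by simp
  have "k \<le> n \<Longrightarrow> (f xs, f (zs k)) \<in> \<theta>" for k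
  proof (induction k)
    case 0 then show ?case using refl by (simp add: zs_def)
  next
    case (Suc k)
    then have kn: "k < n" by simp
    define T where "T = PApp j (map (\<lambda>l. if l = k then PVar 0 else PConst (zs k ! l)) [0..<n])"
    have wfT: "wf_pterm F 1 T" unfolding T_def using j by auto
    have evT: "peval F (\<lambda>_. v) T = f ((zs k)[k := v])" for v
    proof -
      have "map (peval F (\<lambda>_. v)) (map (\<lambda>l. if l = k then PVar 0 else PConst (zs k ! l)) [0..<n])
            = (zs k)[k := v]"
        by (rule nth_equalityI) (auto simp: lz)
      then show ?thesis unfolding T_def using j by simp
    qed
    have "(xs ! k, ys ! k) \<in> \<theta>" using list_all2_nthD[OF rel] kn lx by simp
    then have "(peval F (\<lambda>_. xs ! k) T, peval F (\<lambda>_. ys ! k) T) \<in> \<theta>" using cl wfT by blast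
    moreover have "(zs k)[k := xs ! k] = zs k"
    proof -
      have "zs k ! k = xs ! k" unfolding zs_def using kn lx ly by (simp add: nth_append)
      then show ?thesis by (metis list_update_id)
    qed
    moreover have "(zs k)[k := ys ! k] = zs (Suc k)"
    proof -
      have d: "drop k xs = xs ! k # drop (Suc k) xs" using kn lx by (simp add: Cons_nth_drop_Suc)
      have t: "take (Suc k) ys = take k ys @ [ys ! k]" using kn ly by (simp add: take_Suc_conv_app_nth)
      show ?thesis unfolding zs_def d t using kn ly by (simp add: list_update_append)
    qed
    ultimately have "(f (zs k), f (zs (Suc k))) \<in> \<theta>" using evT by simp
    then show ?case using Suc trans by simp
  qed
  from this[of n] have "(f xs, f (zs n)) \<in> \<theta>" by simp
  moreover have "zs n = ys" unfolding zs_def using lx ly by simp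
  ultimately show "(f xs, f ys) \<in> \<theta>" by simp
qed

lemma unary_closed_congruence:
  assumes eq: "equiv UNIV \<theta>"
    and cl: "\<And>T x y. wf_pterm F 1 T \<Longrightarrow> (x, y) \<in> \<theta> \<Longrightarrow> (peval F (\<lambda>_. x) T, peval F (\<lambda>_. y) T) \<in> \<theta>"
  shows "congruence F \<theta>"
  unfolding congruence_def using unary_closed_congruence_aux[OF eq cl] eq by fast

lemma simple_cases:
  assumes "simple_alg F" "equiv UNIV \<theta>"
    and "\<And>T x y. wf_pterm F 1 T \<Longrightarrow> (x, y) \<in> \<theta> \<Longrightarrow> (peval F (\<lambda>_. x) T, peval F (\<lambda>_. y) T) \<in> \<theta>"
  shows "\<theta> = Id \<or> \<theta> = UNIV"
  using assms unary_closed_congruence unfolding simple_alg_def by blast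



definition subst_at :: "nat \<Rightarrow> 'a pterm \<Rightarrow> 'a pterm \<Rightarrow> 'a pterm" where
  "subst_at s T H = psubst (\<lambda>k. if k = s then psubst (\<lambda>_. PVar s) T else PVar k) H"

lemma peval_subst_at: "peval F e (subst_at s T H) = peval F (e(s := peval F (\<lambda>_. e s) T)) H"
proof -
  have "(\<lambda>k. peval F e (if k = s then psubst (\<lambda>_. PVar s) T else PVar k)) = e(s := peval F (\<lambda>_. e s) T)"
    by (rule ext) (simp add: peval_psubst)
  then show ?thesis unfolding subst_at_def peval_psubst by simp
qed

lemma wf_subst_at: "wf_pterm F n H \<Longrightarrow> wf_pterm F 1 T \<Longrightarrow> wf_pterm F (max n (Suc s)) (subst_at s T H)"
  unfolding subst_at_def
  by (rule wf_psubst) (auto intro: wf_psubst)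

locale tsetting =
  fixes F :: "('a::finite) ops" and U :: "'a set" and R :: "'a ring" and u0 u1 :: 'a
  assumes simple: "simple_alg F"
  and fld: "field R" and carr: "carrier R = U"
  and aff: "\<forall>n (g :: 'a list \<Rightarrow> 'a).
        (\<exists>f. is_pol F n f \<and> (\<forall>xs. length xs = n \<and> set xs \<subseteq> U \<longrightarrow> f xs \<in> U) \<and>
             (\<forall>xs. length xs = n \<and> set xs \<subseteq> U \<longrightarrow> g xs = f xs))
        \<longleftrightarrow>
        (\<exists>c \<in> U. \<exists>lam. (\<forall>i<n. lam i \<in> U) \<and>
             (\<forall>xs. length xs = n \<and> set xs \<subseteq> U \<longrightarrow>
                g xs = c \<oplus>\<^bsub>R\<^esub> (\<Oplus>\<^bsub>R\<^esub>i\<in>{..<n}. lam i \<otimes>\<^bsub>R\<^esub> xs ! i)))"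
  and u01: "u0 \<in> U" "u1 \<in> U" "u0 \<noteq> u1"

sublocale tsetting \<subseteq> R: field R by (rule fld)

context tsetting
begin

definition good :: "'a pterm \<Rightarrow> bool" where
  "good H \<longleftrightarrow> (\<exists>n. wf_pterm F n H) \<and> (\<forall>e. peval F e H \<in> U)"

lemma good_subst_at: "good H \<Longrightarrow> wf_pterm F 1 T \<Longrightarrow> good (subst_at s T H)"
  unfolding good_def using wf_subst_at peval_subst_at by metis

lemma cong_cases:
  assumes "equiv UNIV \<theta>"
    and "\<And>T x y. wf_pterm F 1 T \<Longrightarrow> (x, y) \<in> \<theta> \<Longrightarrow> (peval F (\<lambda>_. x) T, peval F (\<lambda>_. y) T) \<in> \<theta>"
    and "\<And>x y. x \<in> U \<Longrightarrow> y \<in> U \<Longrightarrow> (x, y) \<in> \<theta>"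
  shows "\<theta> = UNIV"
  using simple_cases[OF simple assms(1,2)] assms(3) u01 by auto

lemma affine_env:
  assumes "good H" "wf_pterm F n H"
  shows "\<exists>c\<in>U. \<exists>lam. (\<forall>i<n. lam i \<in> U) \<and>
     (\<forall>e. (\<forall>k<n. e k \<in> U) \<longrightarrow> peval F e H = c \<oplus>\<^bsub>R\<^esub> (\<Oplus>\<^bsub>R\<^esub>i\<in>{..<n}. lam i \<otimes>\<^bsub>R\<^esub> e i))"
proof -
  define f where "f xs = peval F (\<lambda>k. xs ! k) H" for xs :: "'a list"
  have "is_pol F n f" unfolding is_pol_def f_def using assms(2) by blast
  moreover have "\<forall>xs. length xs = n \<and> set xs \<subseteq> U \<longrightarrow> f xs \<in> U" using assms(1) unfolding good_def f_def by blast
  ultimately have L: "\<exists>f'. is_pol F n f' \<and> (\<forall>xs. length xs = n \<and> set xs \<subseteq> U \<longrightarrow> f' xs \<in> U) \<and>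
             (\<forall>xs. length xs = n \<and> set xs \<subseteq> U \<longrightarrow> f xs = f' xs)" by blast
  obtain c lam where c: "c \<in> U" "\<forall>i<n. lam i \<in> U"
    and fx: "\<forall>xs. length xs = n \<and> set xs \<subseteq> U \<longrightarrow>
                f xs = c \<oplus>\<^bsub>R\<^esub> (\<Oplus>\<^bsub>R\<^esub>i\<in>{..<n}. lam i \<otimes>\<^bsub>R\<^esub> xs ! i)"
    using iffD1[OF spec[OF spec[OF aff, of n], of f] L] by blast
  have "peval F e H = c \<oplus>\<^bsub>R\<^esub> (\<Oplus>\<^bsub>R\<^esub>i\<in>{..<n}. lam i \<otimes>\<^bsub>R\<^esub> e i)" if e: "\<forall>k<n. e k \<in> U" for e
  proof -
    have "peval F e H = f (map e [0..<n])" unfolding f_def by (rule peval_dep[OF assms(2)]) simp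
    also have "\<dots> = c \<oplus>\<^bsub>R\<^esub> (\<Oplus>\<^bsub>R\<^esub>i\<in>{..<n}. lam i \<otimes>\<^bsub>R\<^esub> (map e [0..<n]) ! i)"
    proof -
      have "length (map e [0..<n]) = n \<and> set (map e [0..<n]) \<subseteq> U" using e by auto
      then show ?thesis using fx by blast
    qed
    also have "(\<Oplus>\<^bsub>R\<^esub>i\<in>{..<n}. lam i \<otimes>\<^bsub>R\<^esub> (map e [0..<n]) ! i) = (\<Oplus>\<^bsub>R\<^esub>i\<in>{..<n}. lam i \<otimes>\<^bsub>R\<^esub> e i)"
      by (rule R.finsum_cong') (use c e carr in auto)
    finally show ?thesis .
  qed
  then show ?thesis using c by blast
qed

lemma swap4: "a \<in> carrier R \<Longrightarrow> b \<in> carrier R \<Longrightarrow> c \<in> carrier R \<Longrightarrow> d \<in> carrier R \<Longrightarrow>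
  (a \<oplus>\<^bsub>R\<^esub> b) \<oplus>\<^bsub>R\<^esub> (c \<oplus>\<^bsub>R\<^esub> d) = (a \<oplus>\<^bsub>R\<^esub> c) \<oplus>\<^bsub>R\<^esub> (b \<oplus>\<^bsub>R\<^esub> d)"
  by (simp add: R.a_ac)

definition DQ :: "'a pterm \<Rightarrow> (nat \<Rightarrow> 'a) \<Rightarrow> nat \<Rightarrow> 'a \<Rightarrow> 'a \<Rightarrow> nat \<Rightarrow> 'a \<Rightarrow> 'a \<Rightarrow> bool" where
  "DQ H e j x x' i y y' \<longleftrightarrow>
     peval F (e(j := x, i := y)) H \<oplus>\<^bsub>R\<^esub> peval F (e(j := x', i := y')) H =
     peval F (e(j := x, i := y')) H \<oplus>\<^bsub>R\<^esub> peval F (e(j := x', i := y)) H"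

lemma DQ_base:
  assumes "good H" "\<forall>k. e k \<in> U" "x \<in> U" "x' \<in> U" "y \<in> U" "y' \<in> U" "i \<noteq> j"
  shows "DQ H e j x x' i y y'"
proof -
  obtain n where n: "wf_pterm F n H" using assms(1) good_def by blast
  obtain c lam where c: "c \<in> U" "\<forall>i<n. lam i \<in> U"
    and ev: "\<forall>e. (\<forall>k<n. e k \<in> U) \<longrightarrow> peval F e H = c \<oplus>\<^bsub>R\<^esub> (\<Oplus>\<^bsub>R\<^esub>i\<in>{..<n}. lam i \<otimes>\<^bsub>R\<^esub> e i)"
    using affine_env[OF assms(1) n] by blast
  define S where "S e = (\<Oplus>\<^bsub>R\<^esub>i\<in>{..<n}. lam i \<otimes>\<^bsub>R\<^esub> e i)" for e
  define e1 e2 e3 e4 where "e1 = e(j := x, i := y)" "e2 = e(j := x', i := y')"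
    "e3 = e(j := x, i := y')" "e4 = e(j := x', i := y)"
  have inU: "\<forall>k. e1 k \<in> U" "\<forall>k. e2 k \<in> U" "\<forall>k. e3 k \<in> U" "\<forall>k. e4 k \<in> U"
    using assms unfolding e1_e2_e3_e4_def by auto
  have Sc: "S e' \<in> U" if "\<forall>k. e' k \<in> U" for e'
  proof -
    have "S e' \<in> carrier R" unfolding S_def using c that carr by (intro R.finsum_closed) auto
    then show ?thesis using carr by simp
  qed
  have "S e1 \<oplus>\<^bsub>R\<^esub> S e2 = (\<Oplus>\<^bsub>R\<^esub>k\<in>{..<n}. lam k \<otimes>\<^bsub>R\<^esub> e1 k \<oplus>\<^bsub>R\<^esub> lam k \<otimes>\<^bsub>R\<^esub> e2 k)"
    unfolding S_def using c inU carr by (intro R.finsum_addf[symmetric]) auto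
  also have "\<dots> = (\<Oplus>\<^bsub>R\<^esub>k\<in>{..<n}. lam k \<otimes>\<^bsub>R\<^esub> e3 k \<oplus>\<^bsub>R\<^esub> lam k \<otimes>\<^bsub>R\<^esub> e4 k)"
  proof (rule R.finsum_cong')
    fix k assume "k \<in> {..<n}"
    then have lk: "lam k \<in> carrier R" using c carr by auto
    show "lam k \<otimes>\<^bsub>R\<^esub> e1 k \<oplus>\<^bsub>R\<^esub> lam k \<otimes>\<^bsub>R\<^esub> e2 k = lam k \<otimes>\<^bsub>R\<^esub> e3 k \<oplus>\<^bsub>R\<^esub> lam k \<otimes>\<^bsub>R\<^esub> e4 k"
    proof (cases "k = i")
      case True
      have "lam k \<otimes>\<^bsub>R\<^esub> y \<in> carrier R" "lam k \<otimes>\<^bsub>R\<^esub> y' \<in> carrier R" using lk assms(5,6) carr by auto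
      then show ?thesis using True assms(7) unfolding e1_e2_e3_e4_def by (simp add: R.a_comm)
    next
      case False
      then show ?thesis unfolding e1_e2_e3_e4_def by (cases "k = j") simp_all
    qed
  qed (use c inU carr in auto)
  also have "\<dots> = S e3 \<oplus>\<^bsub>R\<^esub> S e4"
    unfolding S_def using c inU carr by (intro R.finsum_addf) auto
  finally have SS: "S e1 \<oplus>\<^bsub>R\<^esub> S e2 = S e3 \<oplus>\<^bsub>R\<^esub> S e4" .
  have pe: "peval F e' H = c \<oplus>\<^bsub>R\<^esub> S e'" if "\<forall>k. e' k \<in> U" for e'
    using ev that unfolding S_def by blast
  have cc: "c \<in> carrier R" using c carr by simp
  have "peval F e1 H \<oplus>\<^bsub>R\<^esub> peval F e2 H = (c \<oplus>\<^bsub>R\<^esub> c) \<oplus>\<^bsub>R\<^esub> (S e1 \<oplus>\<^bsub>R\<^esub> S e2)"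
    unfolding pe[OF inU(1)] pe[OF inU(2)] using swap4[OF cc _ cc] Sc[OF inU(1)] Sc[OF inU(2)] carr by simp
  also have "\<dots> = (c \<oplus>\<^bsub>R\<^esub> c) \<oplus>\<^bsub>R\<^esub> (S e3 \<oplus>\<^bsub>R\<^esub> S e4)" using SS by simp
  also have "\<dots> = peval F e3 H \<oplus>\<^bsub>R\<^esub> peval F e4 H"
    unfolding pe[OF inU(3)] pe[OF inU(4)] using swap4[OF cc _ cc] Sc[OF inU(3)] Sc[OF inU(4)] carr by simp
  finally show ?thesis unfolding DQ_def e1_e2_e3_e4_def .
qed

end


context tsetting
begin

lemma good_in: "good H \<Longrightarrow> peval F e H \<in> carrier R"
  using carr unfolding good_def by auto

lemma cancel_a: "a \<in> carrier R \<Longrightarrow> b \<in> carrier R \<Longrightarrow> c \<in> carrier R \<Longrightarrow> a' \<in> carrier R \<Longrightarrow> b' \<in> carrier R \<Longrightarrow> c' \<in> carrier R \<Longrightarrow>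
  a \<oplus>\<^bsub>R\<^esub> c' = c \<oplus>\<^bsub>R\<^esub> a' \<Longrightarrow> c \<oplus>\<^bsub>R\<^esub> b' = b \<oplus>\<^bsub>R\<^esub> c' \<Longrightarrow> a \<oplus>\<^bsub>R\<^esub> b' = b \<oplus>\<^bsub>R\<^esub> a'"
proof -
  assume c: "a \<in> carrier R" "b \<in> carrier R" "c \<in> carrier R" "a' \<in> carrier R" "b' \<in> carrier R" "c' \<in> carrier R"
    and h1: "a \<oplus>\<^bsub>R\<^esub> c' = c \<oplus>\<^bsub>R\<^esub> a'" and h2: "c \<oplus>\<^bsub>R\<^esub> b' = b \<oplus>\<^bsub>R\<^esub> c'"
  have "(a \<oplus>\<^bsub>R\<^esub> b') \<oplus>\<^bsub>R\<^esub> (c \<oplus>\<^bsub>R\<^esub> c') = (a \<oplus>\<^bsub>R\<^esub> c') \<oplus>\<^bsub>R\<^esub> (c \<oplus>\<^bsub>R\<^esub> b')"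
    using c by (simp add: R.a_ac)
  also have "\<dots> = (c \<oplus>\<^bsub>R\<^esub> a') \<oplus>\<^bsub>R\<^esub> (b \<oplus>\<^bsub>R\<^esub> c')" using h1 h2 by simp
  also have "\<dots> = (b \<oplus>\<^bsub>R\<^esub> a') \<oplus>\<^bsub>R\<^esub> (c \<oplus>\<^bsub>R\<^esub> c')" using c by (simp add: R.a_ac)
  finally show ?thesis using c by (simp add: R.add.right_cancel)
qed

lemma cancel_t: "a1 \<in> carrier R \<Longrightarrow> a2 \<in> carrier R \<Longrightarrow> a3 \<in> carrier R \<Longrightarrow> b1 \<in> carrier R \<Longrightarrow> b2 \<in> carrier R \<Longrightarrow> b3 \<in> carrier R \<Longrightarrow>
  a1 \<oplus>\<^bsub>R\<^esub> b2 = b1 \<oplus>\<^bsub>R\<^esub> a2 \<Longrightarrow> a2 \<oplus>\<^bsub>R\<^esub> b3 = b2 \<oplus>\<^bsub>R\<^esub> a3 \<Longrightarrow> a1 \<oplus>\<^bsub>R\<^esub> b3 = b1 \<oplus>\<^bsub>R\<^esub> a3"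
proof -
  assume c: "a1 \<in> carrier R" "a2 \<in> carrier R" "a3 \<in> carrier R" "b1 \<in> carrier R" "b2 \<in> carrier R" "b3 \<in> carrier R"
    and h1: "a1 \<oplus>\<^bsub>R\<^esub> b2 = b1 \<oplus>\<^bsub>R\<^esub> a2" and h2: "a2 \<oplus>\<^bsub>R\<^esub> b3 = b2 \<oplus>\<^bsub>R\<^esub> a3"
  have "(a1 \<oplus>\<^bsub>R\<^esub> b3) \<oplus>\<^bsub>R\<^esub> (a2 \<oplus>\<^bsub>R\<^esub> b2) = (a1 \<oplus>\<^bsub>R\<^esub> b2) \<oplus>\<^bsub>R\<^esub> (a2 \<oplus>\<^bsub>R\<^esub> b3)"
    using c by (simp add: R.a_ac)
  also have "\<dots> = (b1 \<oplus>\<^bsub>R\<^esub> a2) \<oplus>\<^bsub>R\<^esub> (b2 \<oplus>\<^bsub>R\<^esub> a3)" using h1 h2 by simp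
  also have "\<dots> = (b1 \<oplus>\<^bsub>R\<^esub> a3) \<oplus>\<^bsub>R\<^esub> (a2 \<oplus>\<^bsub>R\<^esub> b2)" using c by (simp add: R.a_ac)
  finally show ?thesis using c by (simp add: R.add.right_cancel)
qed

lemma sym_aux: "a \<in> carrier R \<Longrightarrow> b \<in> carrier R \<Longrightarrow> c \<in> carrier R \<Longrightarrow> d \<in> carrier R \<Longrightarrow>
  a \<oplus>\<^bsub>R\<^esub> b = c \<oplus>\<^bsub>R\<^esub> d \<Longrightarrow> d \<oplus>\<^bsub>R\<^esub> c = b \<oplus>\<^bsub>R\<^esub> a"
  by (metis R.a_comm)

lemma DQ_dep:
  assumes "wf_pterm F n H" "\<forall>k<n. e k = e' k"
  shows "DQ H e j x x' i y y' \<longleftrightarrow> DQ H e' j x x' i y y'"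
proof -
  have "\<And>a b. peval F (e(j := a, i := b)) H = peval F (e'(j := a, i := b)) H"
    by (rule peval_dep[OF assms(1)]) (use assms(2) in auto)
  then show ?thesis unfolding DQ_def by simp
qed

lemma DQ_upd_param:
  assumes "s \<noteq> i" "s \<noteq> j"
  shows "DQ (subst_at s T H) (e(s := v)) j x x' i y y' \<longleftrightarrow> DQ H (e(s := peval F (\<lambda>_. v) T)) j x x' i y y'"
proof -
  have "\<And>a b. (e(s := v, j := a, i := b))(s := peval F (\<lambda>_. (e(s := v, j := a, i := b)) s) T)
        = e(s := peval F (\<lambda>_. v) T, j := a, i := b)"
    using assms by (auto simp: fun_eq_iff)
  then show ?thesis unfolding DQ_def peval_subst_at by simp
qed

lemma DQ_upd_j:
  assumes "i \<noteq> j"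
  shows "DQ (subst_at j T H) e j x x' i y y' \<longleftrightarrow> DQ H e j (peval F (\<lambda>_. x) T) (peval F (\<lambda>_. x') T) i y y'"
proof -
  have "\<And>a b. (e(j := a, i := b))(j := peval F (\<lambda>_. (e(j := a, i := b)) j) T)
        = e(j := peval F (\<lambda>_. a) T, i := b)"
    using assms by (auto simp: fun_eq_iff)
  then show ?thesis unfolding DQ_def peval_subst_at by simp
qed

lemma DQ_swap:
  assumes "i \<noteq> j" "good H"
  shows "DQ H e j x x' i y y' \<longleftrightarrow> DQ H e i y y' j x x'"
proof -
  have "\<And>a b. e(j := a, i := b) = e(i := b, j := a)" using assms by (auto simp: fun_eq_iff)
  then show ?thesis unfolding DQ_def using good_in[OF assms(2)] by (simp add: R.a_comm)
qed

lemma equiv_kernel: "equiv UNIV {(v, v'). f v = f v'}"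
  unfolding equiv_def refl_on_def sym_def trans_def by auto

lemma DQ_params:
  assumes ij: "i \<noteq> j" and U: "x \<in> U" "x' \<in> U" "y \<in> U" "y' \<in> U"
  shows "finite B \<Longrightarrow> \<forall>H e. good H \<longrightarrow> (\<forall>k. k \<notin> B \<longrightarrow> e k \<in> U) \<longrightarrow> DQ H e j x x' i y y'"
proof (induction B rule: finite_induct)
  case empty
  then show ?case using DQ_base U ij by blast
next
  case (insert s B)
  show ?case
  proof (intro allI impI)
    fix H e assume gH: "good H" and eU: "\<forall>k. k \<notin> insert s B \<longrightarrow> e k \<in> U"
    show "DQ H e j x x' i y y'"
    proof (cases "s = i \<or> s = j")
      case True
      have "\<And>a b. e(j := a, i := b) = (e(s := u0))(j := a, i := b)" using True by (auto simp: fun_eq_iff)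
      then have "DQ H e j x x' i y y' \<longleftrightarrow> DQ H (e(s := u0)) j x x' i y y'" unfolding DQ_def by simp
      moreover have "DQ H (e(s := u0)) j x x' i y y'" using insert.IH gH eU u01 by auto
      ultimately show ?thesis by simp
    next
      case False
      define \<Phi> where "\<Phi> v = (\<lambda>H e. good H \<and> (\<forall>k. k \<notin> insert s B \<longrightarrow> e k \<in> U) \<and> DQ H (e(s := v)) j x x' i y y')" for v
      define \<rho> where "\<rho> = {(v, v'). \<Phi> v = \<Phi> v'}"
      have rho_iff: "(v, v') \<in> \<rho> \<longleftrightarrow> (\<forall>H e. good H \<longrightarrow> (\<forall>k. k \<notin> insert s B \<longrightarrow> e k \<in> U) \<longrightarrow>
           (DQ H (e(s := v)) j x x' i y y' \<longleftrightarrow> DQ H (e(s := v')) j x x' i y y'))" for v v'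
        unfolding \<rho>_def \<Phi>_def fun_eq_iff by blast
      have eq: "equiv UNIV \<rho>" unfolding \<rho>_def by (rule equiv_kernel)
      have cl: "(peval F (\<lambda>_. v) T, peval F (\<lambda>_. v') T) \<in> \<rho>" if "wf_pterm F 1 T" "(v, v') \<in> \<rho>" for T v v'
      proof -
        have "DQ H (e(s := peval F (\<lambda>_. v) T)) j x x' i y y' \<longleftrightarrow> DQ H (e(s := peval F (\<lambda>_. v') T)) j x x' i y y'"
          if "good H" "\<forall>k. k \<notin> insert s B \<longrightarrow> e k \<in> U" for H e
        proof -
          have "good (subst_at s T H)" using good_subst_at \<open>wf_pterm F 1 T\<close> that(1) by blast
          then have "DQ (subst_at s T H) (e(s := v)) j x x' i y y' \<longleftrightarrow> DQ (subst_at s T H) (e(s := v')) j x x' i y y'"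
            using \<open>(v, v') \<in> \<rho>\<close> that(2) unfolding rho_iff by blast
          moreover have "s \<noteq> i" "s \<noteq> j" using False by auto
          ultimately show ?thesis using DQ_upd_param by simp
        qed
        then show ?thesis unfolding rho_iff by blast
      qed
      have uu: "(v, v') \<in> \<rho>" if "v \<in> U" "v' \<in> U" for v v'
      proof -
        have "DQ H (e(s := w)) j x x' i y y'" if "good H" "\<forall>k. k \<notin> insert s B \<longrightarrow> e k \<in> U" "w \<in> U" for H e w
          using insert.IH that by auto
        then show ?thesis unfolding rho_iff using \<open>v \<in> U\<close> \<open>v' \<in> U\<close> by blast
      qed
      have "\<rho> = UNIV" by (rule cong_cases[OF eq cl uu])
      then have "(e s, u0) \<in> \<rho>" by simp
      then have "DQ H (e(s := e s)) j x x' i y y' \<longleftrightarrow> DQ H (e(s := u0)) j x x' i y y'"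
        unfolding rho_iff using gH eU by blast
      moreover have "DQ H (e(s := u0)) j x x' i y y'" using insert.IH gH eU u01 by auto
      ultimately show ?thesis by simp
    qed
  qed
qed

lemma DQ_U:
  assumes "good H" "i \<noteq> j" "x \<in> U" "x' \<in> U" "y \<in> U" "y' \<in> U"
  shows "DQ H e j x x' i y y'"
proof -
  obtain n where n: "wf_pterm F n H" using assms(1) good_def by blast
  define e' where "e' k = (if k < n then e k else u0)" for k
  have "\<forall>k. k \<notin> {..<n} \<longrightarrow> e' k \<in> U" by (simp add: e'_def u01)
  then have "DQ H e' j x x' i y y'"
    using DQ_params[OF assms(2-6), of "{..<n}"] assms(1) by blast
  moreover have "\<forall>k<n. e k = e' k" unfolding e'_def by simp
  ultimately show ?thesis using DQ_dep[OF n] by blast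
qed

lemma DQ_free:
  assumes ij: "i \<noteq> j"
    and hyp: "\<And>H e x x' y y'. good H \<Longrightarrow> x \<in> U \<Longrightarrow> x' \<in> U \<Longrightarrow> Pc y y' \<Longrightarrow> DQ H e j x x' i y y'"
  shows "good H \<Longrightarrow> Pc y y' \<Longrightarrow> DQ H e j x x' i y y'"
proof -
  define \<theta> where "\<theta> = {(x, x'). \<forall>H e y y'. good H \<longrightarrow> Pc y y' \<longrightarrow> DQ H e j x x' i y y'}"
  have r: "(x, x) \<in> \<theta>" for x
  proof -
    have "DQ H e j x x i y y'" if "good H" for H e y y'
      unfolding DQ_def by (rule R.a_comm[OF good_in[OF that] good_in[OF that]])
    then show ?thesis unfolding \<theta>_def by blast
  qed
  have s: "(x', x) \<in> \<theta>" if "(x, x') \<in> \<theta>" for x x'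
  proof -
    have "DQ H e j x' x i y y'" if "good H" "Pc y y'" for H e y y'
    proof -
      have "DQ H e j x x' i y y'" using \<open>(x, x') \<in> \<theta>\<close> that unfolding \<theta>_def by blast
      then show ?thesis unfolding DQ_def by (rule sym_aux[OF good_in[OF that(1)] good_in[OF that(1)] good_in[OF that(1)] good_in[OF that(1)]])
    qed
    then show ?thesis unfolding \<theta>_def by blast
  qed
  have t: "(x, x'') \<in> \<theta>" if "(x, x') \<in> \<theta>" "(x', x'') \<in> \<theta>" for x x' x''
  proof -
    have "DQ H e j x x'' i y y'" if "good H" "Pc y y'" for H e y y'
    proof -
      have "DQ H e j x x' i y y'" "DQ H e j x' x'' i y y'"
        using \<open>(x, x') \<in> \<theta>\<close> \<open>(x', x'') \<in> \<theta>\<close> that unfolding \<theta>_def by blast+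
      then show ?thesis unfolding DQ_def by (rule cancel_t[OF good_in[OF that(1)] good_in[OF that(1)] good_in[OF that(1)]
        good_in[OF that(1)] good_in[OF that(1)] good_in[OF that(1)]])
    qed
    then show ?thesis unfolding \<theta>_def by blast
  qed
  have eq: "equiv UNIV \<theta>"
    by (rule equivI) (auto intro: refl_onI symI transI r s t)
  have cl: "(peval F (\<lambda>_. v) T, peval F (\<lambda>_. v') T) \<in> \<theta>" if "wf_pterm F 1 T" "(v, v') \<in> \<theta>" for T v v'
  proof -
    have "DQ H e j (peval F (\<lambda>_. v) T) (peval F (\<lambda>_. v') T) i y y'" if "good H" "Pc y y'" for H e y y'
    proof -
      have "good (subst_at j T H)" using good_subst_at \<open>wf_pterm F 1 T\<close> that(1) by blast
      then have "DQ (subst_at j T H) e j v v' i y y'" using \<open>(v, v') \<in> \<theta>\<close> that(2) unfolding \<theta>_def by blast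
      then show ?thesis using DQ_upd_j[OF ij] by simp
    qed
    then show ?thesis unfolding \<theta>_def by blast
  qed
  have uu: "(v, v') \<in> \<theta>" if "v \<in> U" "v' \<in> U" for v v'
    unfolding \<theta>_def using hyp that by blast
  have "\<theta> = UNIV" by (rule cong_cases[OF eq cl uu])
  then have "(x, x') \<in> \<theta>" by simp
  then have "\<forall>H e y y'. good H \<longrightarrow> Pc y y' \<longrightarrow> DQ H e j x x' i y y'" unfolding \<theta>_def by simp
  then show "good H \<Longrightarrow> Pc y y' \<Longrightarrow> DQ H e j x x' i y y'" by blast
qed

lemma DQ_all:
  assumes "good H" "i \<noteq> j"
  shows "DQ H e j x x' i y y'"
proof -
  have s2: "\<And>i j H e x x' y y'. i \<noteq> j \<Longrightarrow> good H \<Longrightarrow> y \<in> U \<and> y' \<in> U \<Longrightarrow> DQ H e j x x' i y y'"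
  proof -
    fix i j :: nat and H e x x' y y'
    assume "i \<noteq> j" "good H" "y \<in> U \<and> y' \<in> U"
    then show "DQ H e j x x' i y y'"
      using DQ_free[of i j "\<lambda>y y'. y \<in> U \<and> y' \<in> U"] DQ_U by blast
  qed
  have s3: "\<And>H e x x' y y'. good H \<Longrightarrow> x \<in> U \<Longrightarrow> x' \<in> U \<Longrightarrow> True \<Longrightarrow> DQ H e j x x' i y y'"
    using s2 DQ_swap assms(2) by (metis)
  show ?thesis using DQ_free[of i j "\<lambda>_ _. True", OF assms(2) s3] assms(1) by blast
qed

end


context tsetting
begin

lemma MD:
  fixes x x' :: 'a
  assumes gH: "good H"
  shows "finite W \<Longrightarrow> j \<notin> W \<Longrightarrow> \<forall>ea eb :: nat \<Rightarrow> 'a. (\<forall>k. k \<notin> W \<longrightarrow> k \<noteq> j \<longrightarrow> ea k = eb k) \<longrightarrow>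
    peval F (ea(j := x)) H \<oplus>\<^bsub>R\<^esub> peval F (eb(j := x')) H = peval F (eb(j := x)) H \<oplus>\<^bsub>R\<^esub> peval F (ea(j := x')) H"
proof (induction W rule: finite_induct)
  case empty
  show ?case
  proof (intro allI impI)
    fix ea eb :: "nat \<Rightarrow> 'a" assume "\<forall>k. k \<notin> {} \<longrightarrow> k \<noteq> j \<longrightarrow> ea k = eb k"
    then have "ea(j := x) = eb(j := x)" "ea(j := x') = eb(j := x')" by (auto simp: fun_eq_iff)
    then show "peval F (ea(j := x)) H \<oplus>\<^bsub>R\<^esub> peval F (eb(j := x')) H = peval F (eb(j := x)) H \<oplus>\<^bsub>R\<^esub> peval F (ea(j := x')) H"
      using R.a_comm[OF good_in[OF gH] good_in[OF gH]] by simp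
  qed
next
  case (insert i W)
  show ?case
  proof (intro allI impI)
    fix ea eb :: "nat \<Rightarrow> 'a" assume agree: "\<forall>k. k \<notin> insert i W \<longrightarrow> k \<noteq> j \<longrightarrow> ea k = eb k"
    have ij: "i \<noteq> j" using insert.prems by auto
    define ec where "ec = eb(i := ea i)"
    have "\<forall>k. k \<notin> W \<longrightarrow> k \<noteq> j \<longrightarrow> ea k = ec k" using agree unfolding ec_def by auto
    then have IH: "peval F (ea(j := x)) H \<oplus>\<^bsub>R\<^esub> peval F (ec(j := x')) H = peval F (ec(j := x)) H \<oplus>\<^bsub>R\<^esub> peval F (ea(j := x')) H"
    proof -
      have "j \<notin> W" using insert.prems by simp
      then show ?thesis using insert.IH \<open>\<forall>k. k \<notin> W \<longrightarrow> k \<noteq> j \<longrightarrow> ea k = ec k\<close> by blast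
    qed
    have D: "DQ H eb j x x' i (ea i) (eb i)" using DQ_all[OF gH ij] .
    have e1: "eb(j := x, i := ea i) = ec(j := x)" unfolding ec_def using ij by (auto simp: fun_eq_iff)
    have e2: "eb(j := x', i := eb i) = eb(j := x')" using ij by (auto simp: fun_eq_iff)
    have e3: "eb(j := x, i := eb i) = eb(j := x)" using ij by (auto simp: fun_eq_iff)
    have e4: "eb(j := x', i := ea i) = ec(j := x')" unfolding ec_def using ij by (auto simp: fun_eq_iff)
    have D': "peval F (ec(j := x)) H \<oplus>\<^bsub>R\<^esub> peval F (eb(j := x')) H = peval F (eb(j := x)) H \<oplus>\<^bsub>R\<^esub> peval F (ec(j := x')) H"
      using D unfolding DQ_def e1 e2 e3 e4 .
    show "peval F (ea(j := x)) H \<oplus>\<^bsub>R\<^esub> peval F (eb(j := x')) H = peval F (eb(j := x)) H \<oplus>\<^bsub>R\<^esub> peval F (ea(j := x')) H"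
      by (rule cancel_a[OF good_in[OF gH] good_in[OF gH] good_in[OF gH] good_in[OF gH] good_in[OF gH] good_in[OF gH] IH D'])
  qed
qed

lemma sep_formula:
  assumes gH: "good H"
  shows "finite V \<Longrightarrow> \<forall>e. (\<forall>k. k \<notin> V \<longrightarrow> e k = e0 k) \<longrightarrow>
    peval F e H \<oplus>\<^bsub>R\<^esub> (\<Oplus>\<^bsub>R\<^esub>i\<in>V. peval F e0 H) = peval F e0 H \<oplus>\<^bsub>R\<^esub> (\<Oplus>\<^bsub>R\<^esub>i\<in>V. peval F (e0(i := e i)) H)"
proof (induction V rule: finite_induct)
  case empty
  have "\<And>e. (\<forall>k. e k = e0 k) \<Longrightarrow> e = e0" by (simp add: fun_eq_iff)
  then show ?case by auto
next
  case (insert j V)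
  show ?case
  proof (intro allI impI)
    fix e assume agree: "\<forall>k. k \<notin> insert j V \<longrightarrow> e k = e0 k"
    define e' where "e' = e(j := e0 j)"
    have "\<forall>k. k \<notin> V \<longrightarrow> e' k = e0 k" using agree unfolding e'_def by auto
    then have IH: "peval F e' H \<oplus>\<^bsub>R\<^esub> (\<Oplus>\<^bsub>R\<^esub>i\<in>V. peval F e0 H) = peval F e0 H \<oplus>\<^bsub>R\<^esub> (\<Oplus>\<^bsub>R\<^esub>i\<in>V. peval F (e0(i := e' i)) H)"
      using insert.IH by blast
    have S': "(\<Oplus>\<^bsub>R\<^esub>i\<in>V. peval F (e0(i := e' i)) H) = (\<Oplus>\<^bsub>R\<^esub>i\<in>V. peval F (e0(i := e i)) H)"
      by (rule R.finsum_cong') (use insert.hyps good_in[OF gH] in \<open>auto simp: e'_def\<close>)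
    have "\<forall>k. k \<notin> V \<longrightarrow> k \<noteq> j \<longrightarrow> e k = e0 k" using agree by auto
    then have M: "peval F (e(j := e j)) H \<oplus>\<^bsub>R\<^esub> peval F (e0(j := e0 j)) H = peval F (e0(j := e j)) H \<oplus>\<^bsub>R\<^esub> peval F (e(j := e0 j)) H"
      using MD[OF gH insert.hyps(1,2)] by blast
    then have M': "peval F e H \<oplus>\<^bsub>R\<^esub> peval F e0 H = peval F (e0(j := e j)) H \<oplus>\<^bsub>R\<^esub> peval F e' H"
      unfolding e'_def by simp
    define h0 where "h0 = peval F e0 H"
    define SV where "SV = (\<Oplus>\<^bsub>R\<^esub>i\<in>V. peval F e0 H)"
    define S2 where "S2 = (\<Oplus>\<^bsub>R\<^esub>i\<in>V. peval F (e0(i := e i)) H)"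
    define a where "a = peval F e H"
    define b where "b = peval F (e0(j := e j)) H"
    define c where "c = peval F e' H"
    have cr: "h0 \<in> carrier R" "SV \<in> carrier R" "S2 \<in> carrier R" "a \<in> carrier R" "b \<in> carrier R" "c \<in> carrier R"
      unfolding h0_def SV_def S2_def a_def b_def c_def using good_in[OF gH] by (auto intro: R.finsum_closed)
    have IH': "c \<oplus>\<^bsub>R\<^esub> SV = h0 \<oplus>\<^bsub>R\<^esub> S2" using IH S' unfolding c_def SV_def h0_def S2_def by simp
    have M'': "a \<oplus>\<^bsub>R\<^esub> h0 = b \<oplus>\<^bsub>R\<^esub> c" using M' unfolding a_def h0_def b_def c_def .
    have "a \<oplus>\<^bsub>R\<^esub> (h0 \<oplus>\<^bsub>R\<^esub> SV) = (a \<oplus>\<^bsub>R\<^esub> h0) \<oplus>\<^bsub>R\<^esub> SV" using cr by (simp add: R.a_assoc)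
    also have "\<dots> = b \<oplus>\<^bsub>R\<^esub> (c \<oplus>\<^bsub>R\<^esub> SV)" using cr M'' by (simp add: R.a_assoc)
    also have "\<dots> = b \<oplus>\<^bsub>R\<^esub> (h0 \<oplus>\<^bsub>R\<^esub> S2)" using IH' by simp
    also have "\<dots> = h0 \<oplus>\<^bsub>R\<^esub> (b \<oplus>\<^bsub>R\<^esub> S2)" using cr by (simp add: R.a_lcomm)
    finally have fin: "a \<oplus>\<^bsub>R\<^esub> (h0 \<oplus>\<^bsub>R\<^esub> SV) = h0 \<oplus>\<^bsub>R\<^esub> (b \<oplus>\<^bsub>R\<^esub> S2)" .
    have L: "(\<Oplus>\<^bsub>R\<^esub>i\<in>insert j V. peval F e0 H) = h0 \<oplus>\<^bsub>R\<^esub> SV"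
      unfolding h0_def SV_def using insert.hyps good_in[OF gH] by (simp add: R.finsum_insert)
    have R2: "(\<Oplus>\<^bsub>R\<^esub>i\<in>insert j V. peval F (e0(i := e i)) H) = b \<oplus>\<^bsub>R\<^esub> S2"
      unfolding b_def S2_def using insert.hyps good_in[OF gH] by (simp add: R.finsum_insert)
    show "peval F e H \<oplus>\<^bsub>R\<^esub> (\<Oplus>\<^bsub>R\<^esub>i\<in>insert j V. peval F e0 H) = peval F e0 H \<oplus>\<^bsub>R\<^esub> (\<Oplus>\<^bsub>R\<^esub>i\<in>insert j V. peval F (e0(i := e i)) H)"
      unfolding L R2 using fin unfolding a_def h0_def .
  qed
qed

end


lemma separation:
  assumes simple: "simple_alg F" and T0: "wf_pterm F 1 T0" "\<forall>z. peval F (\<lambda>_. z) T0 \<in> U"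
    and ab: "peval F (\<lambda>_. a0) T0 \<noteq> peval F (\<lambda>_. b0) T0"
    and xy: "x \<noteq> y"
  shows "\<exists>T. wf_pterm F 1 T \<and> (\<forall>z. peval F (\<lambda>_. z) T \<in> U) \<and> peval F (\<lambda>_. x) T \<noteq> peval F (\<lambda>_. y) T"
proof (rule ccontr)
  assume nex: "\<not> ?thesis"
  define \<Phi> where "\<Phi> v = (\<lambda>T. if wf_pterm F 1 T \<and> (\<forall>z. peval F (\<lambda>_. z) T \<in> U) then Some (peval F (\<lambda>_. v) T) else None)" for v
  define \<theta> where "\<theta> = {(v, v'). \<Phi> v = \<Phi> v'}"
  have th_iff: "(v, v') \<in> \<theta> \<longleftrightarrow> (\<forall>T. wf_pterm F 1 T \<and> (\<forall>z. peval F (\<lambda>_. z) T \<in> U) \<longrightarrow> peval F (\<lambda>_. v) T = peval F (\<lambda>_. v') T)" for v v'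
    unfolding \<theta>_def \<Phi>_def fun_eq_iff by auto
  have eq: "equiv UNIV \<theta>" unfolding \<theta>_def equiv_def refl_on_def sym_def trans_def by auto
  have cl: "(peval F (\<lambda>_. v) T', peval F (\<lambda>_. v') T') \<in> \<theta>" if "wf_pterm F 1 T'" "(v, v') \<in> \<theta>" for T' v v'
  proof -
    have "peval F (\<lambda>_. peval F (\<lambda>_. v) T') T = peval F (\<lambda>_. peval F (\<lambda>_. v') T') T"
      if "wf_pterm F 1 T" "\<forall>z. peval F (\<lambda>_. z) T \<in> U" for T
    proof -
      have w: "wf_pterm F 1 (psubst (\<lambda>_. T') T)" by (rule wf_psubst[OF that(1)]) (use \<open>wf_pterm F 1 T'\<close> in auto)
      have r: "\<forall>z. peval F (\<lambda>_. z) (psubst (\<lambda>_. T') T) \<in> U" using that(2) by (simp add: peval_psubst)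
      have "peval F (\<lambda>_. v) (psubst (\<lambda>_. T') T) = peval F (\<lambda>_. v') (psubst (\<lambda>_. T') T)"
        using \<open>(v, v') \<in> \<theta>\<close> w r unfolding th_iff by blast
      then show ?thesis by (simp add: peval_psubst)
    qed
    then show ?thesis unfolding th_iff by blast
  qed
  have "(x, y) \<in> \<theta>" using nex unfolding th_iff by blast
  then have "\<theta> \<noteq> Id" using xy by auto
  then have "\<theta> = UNIV" using simple_cases[OF simple eq cl] by blast
  then have "(a0, b0) \<in> \<theta>" by simp
  then show False using ab T0 unfolding th_iff by blast
qed

context tsetting
begin

lemma char_one:
  assumes "card U = p ^ m"
  shows "add_pow R (p) (\<one>\<^bsub>R\<^esub>) = \<zero>\<^bsub>R\<^esub>"
proof -
  have fin: "finite (carrier R)" by simp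
  have "add_pow R (card (carrier R)) (\<one>\<^bsub>R\<^esub>) = \<zero>\<^bsub>R\<^esub>"
    by (rule R.add.power_order_eq_one[OF fin]) simp
  then have pm: "add_pow R (p ^ m) (\<one>\<^bsub>R\<^esub>) = \<zero>\<^bsub>R\<^esub>" using assms carr by simp
  have "\<And>m. add_pow R (p ^ m) (\<one>\<^bsub>R\<^esub>) = \<zero>\<^bsub>R\<^esub> \<Longrightarrow> add_pow R (p) (\<one>\<^bsub>R\<^esub>) = \<zero>\<^bsub>R\<^esub>"
  proof -
    fix m show "add_pow R (p ^ m) (\<one>\<^bsub>R\<^esub>) = \<zero>\<^bsub>R\<^esub> \<Longrightarrow> add_pow R (p) (\<one>\<^bsub>R\<^esub>) = \<zero>\<^bsub>R\<^esub>"
    proof (induction m)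
      case 0
      then show ?case using R.one_not_zero by simp
    next
      case (Suc m)
      have "add_pow R (p) (\<one>\<^bsub>R\<^esub>) \<otimes>\<^bsub>R\<^esub> add_pow R (p ^ m) (\<one>\<^bsub>R\<^esub>) = add_pow R (p) (add_pow R (p ^ m) (\<one>\<^bsub>R\<^esub>))"
        by (simp add: R.add_pow_ldistr)
      also have "\<dots> = add_pow R (p ^ m * p) (\<one>\<^bsub>R\<^esub>)" by (simp add: R.add.nat_pow_pow)
      also have "\<dots> = \<zero>\<^bsub>R\<^esub>" using Suc.prems by (simp add: mult.commute)
      finally have "add_pow R (p) (\<one>\<^bsub>R\<^esub>) = \<zero>\<^bsub>R\<^esub> \<or> add_pow R (p ^ m) (\<one>\<^bsub>R\<^esub>) = \<zero>\<^bsub>R\<^esub>"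
        using R.integral by blast
      then show ?case using Suc.IH by blast
    qed
  qed
  then show ?thesis using pm by blast
qed

lemma char_x:
  assumes "card U = p ^ m" "x \<in> carrier R"
  shows "add_pow R (p) x = \<zero>\<^bsub>R\<^esub>"
proof -
  have "add_pow R (p) x = add_pow R (p) (\<one>\<^bsub>R\<^esub> \<otimes>\<^bsub>R\<^esub> x)" using assms by simp
  also have "\<dots> = add_pow R (p) (\<one>\<^bsub>R\<^esub>) \<otimes>\<^bsub>R\<^esub> x" using assms by (simp add: R.add_pow_ldistr)
  also have "\<dots> = \<zero>\<^bsub>R\<^esub>" using char_one[OF assms(1)] assms by simp
  finally show ?thesis .
qed

lemma pow_mod:
  assumes "card U = p ^ m" "x \<in> carrier R"
  shows "add_pow R (n) x = add_pow R (n mod p) x"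
proof -
  have "add_pow R (n) x = add_pow R (n mod p + p * (n div p)) x" by simp
  also have "\<dots> = add_pow R (n mod p) x \<oplus>\<^bsub>R\<^esub> add_pow R (p * (n div p)) x"
    using assms by (simp add: R.add.nat_pow_mult)
  also have "add_pow R (p * (n div p)) x = add_pow R (n div p) (add_pow R (p) x)"
    using assms by (simp add: R.add.nat_pow_pow)
  also have "\<dots> = \<zero>\<^bsub>R\<^esub>" using char_x[OF assms] by simp
  finally show ?thesis using assms by simp
qed

lemma count_sum:
  fixes cl :: "nat \<Rightarrow> 'a" and w :: "'a \<Rightarrow> 'a"
  assumes wc: "\<forall>c. w c \<in> carrier R"
  shows "finite V \<Longrightarrow> (\<Oplus>\<^bsub>R\<^esub>i\<in>V. w (cl i)) = (\<Oplus>\<^bsub>R\<^esub>c\<in>UNIV. add_pow R (card {i\<in>V. cl i = c}) (w c))"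
proof (induction V rule: finite_induct)
  case empty
  show ?case by (simp add: R.finsum_zero)
next
  case (insert j V)
  have cards: "card {i\<in>insert j V. cl i = c} = card {i\<in>V. cl i = c} + (if cl j = c then 1 else 0)" for c
  proof (cases "cl j = c")
    case True
    then have "{i\<in>insert j V. cl i = c} = insert j {i\<in>V. cl i = c}" by auto
    then show ?thesis using insert.hyps True by simp
  next
    case False
    then have "{i\<in>insert j V. cl i = c} = {i\<in>V. cl i = c}" by auto
    then show ?thesis using False by simp
  qed
  have "(\<Oplus>\<^bsub>R\<^esub>c\<in>UNIV. add_pow R (card {i\<in>insert j V. cl i = c}) (w c))
      = (\<Oplus>\<^bsub>R\<^esub>c\<in>UNIV. add_pow R (card {i\<in>V. cl i = c}) (w c) \<oplus>\<^bsub>R\<^esub> (if cl j = c then w c else \<zero>\<^bsub>R\<^esub>))"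
  proof (rule R.finsum_cong')
    fix c :: 'a
    show "add_pow R (card {i\<in>insert j V. cl i = c}) (w c) = add_pow R (card {i\<in>V. cl i = c}) (w c) \<oplus>\<^bsub>R\<^esub> (if cl j = c then w c else \<zero>\<^bsub>R\<^esub>)"
      unfolding cards using wc by (simp add: R.add.nat_pow_mult[symmetric])
  qed (use wc in auto)
  also have "\<dots> = (\<Oplus>\<^bsub>R\<^esub>c\<in>UNIV. add_pow R (card {i\<in>V. cl i = c}) (w c)) \<oplus>\<^bsub>R\<^esub> (\<Oplus>\<^bsub>R\<^esub>c\<in>UNIV. (if cl j = c then w c else \<zero>\<^bsub>R\<^esub>))"
    by (rule R.finsum_addf) (use wc in auto)
  also have "(\<Oplus>\<^bsub>R\<^esub>c\<in>UNIV. (if cl j = c then w c else \<zero>\<^bsub>R\<^esub>)) = w (cl j)"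
    by (rule R.finsum_singleton) (use wc in auto)
  finally have "(\<Oplus>\<^bsub>R\<^esub>c\<in>UNIV. add_pow R (card {i\<in>insert j V. cl i = c}) (w c))
     = (\<Oplus>\<^bsub>R\<^esub>i\<in>V. w (cl i)) \<oplus>\<^bsub>R\<^esub> w (cl j)" using insert.IH by simp
  moreover have "(\<Oplus>\<^bsub>R\<^esub>i\<in>insert j V. w (cl i)) = w (cl j) \<oplus>\<^bsub>R\<^esub> (\<Oplus>\<^bsub>R\<^esub>i\<in>V. w (cl i))"
    using insert.hyps wc by (simp add: R.finsum_insert)
  ultimately show ?case using wc by (simp add: R.a_comm R.finsum_closed)
qed

end


context tsetting
begin

lemma sumform:
  fixes lo hi :: 'a and b :: "nat \<Rightarrow> bool" and t T :: "'a pterm"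
  assumes cardU: "card U = p ^ m" and wt: "wf_pterm F n t" and fin: "finite Vars"
    and wT: "wf_pterm F 1 T" and rT: "\<forall>z. peval F (\<lambda>_. z) T \<in> U"
  defines "cl \<equiv> \<lambda>i. peval F ((\<lambda>_. lo)(i := hi)) t"
  defines "w \<equiv> \<lambda>c. peval F (\<lambda>_. c) T"
  defines "h0 \<equiv> peval F (\<lambda>_. peval F (\<lambda>_. lo) t) T"
  shows "peval F (\<lambda>_. peval F (\<lambda>i. if i \<in> Vars \<and> b i then hi else lo) t) T \<oplus>\<^bsub>R\<^esub>
           (\<Oplus>\<^bsub>R\<^esub>c\<in>UNIV. add_pow R (card {i\<in>Vars. b i \<and> cl i = c} mod p) h0)
         = h0 \<oplus>\<^bsub>R\<^esub> (\<Oplus>\<^bsub>R\<^esub>c\<in>UNIV. add_pow R (card {i\<in>Vars. b i \<and> cl i = c} mod p) (w c))"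
proof -
  define H where "H = psubst (\<lambda>_. t) T"
  have evH: "peval F e H = peval F (\<lambda>_. peval F e t) T" for e unfolding H_def by (simp add: peval_psubst)
  have gH: "good H" unfolding good_def
  proof
    show "\<exists>n. wf_pterm F n H" unfolding H_def using wf_psubst[OF wT, of n "\<lambda>_. t"] wt by blast
    show "\<forall>e. peval F e H \<in> U" using rT evH by simp
  qed
  define Vb where "Vb = {i\<in>Vars. b i}"
  have finVb: "finite Vb" using fin unfolding Vb_def by simp
  define e0 where "e0 = (\<lambda>_::nat. lo)"
  define eb where "eb = (\<lambda>i. if i \<in> Vars \<and> b i then hi else lo)"
  have agree: "\<forall>k. k \<notin> Vb \<longrightarrow> eb k = e0 k" unfolding eb_def e0_def Vb_def by auto
  have SF: "peval F eb H \<oplus>\<^bsub>R\<^esub> (\<Oplus>\<^bsub>R\<^esub>i\<in>Vb. peval F e0 H) = peval F e0 H \<oplus>\<^bsub>R\<^esub> (\<Oplus>\<^bsub>R\<^esub>i\<in>Vb. peval F (e0(i := eb i)) H)"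
    using sep_formula[OF gH finVb] agree by blast
  have wc: "\<forall>c. w c \<in> carrier R" unfolding w_def using rT carr by simp
  have h0c: "h0 \<in> carrier R" unfolding h0_def using rT carr by simp
  have h0e: "peval F e0 H = h0" unfolding h0_def evH e0_def ..
  have S1: "(\<Oplus>\<^bsub>R\<^esub>i\<in>Vb. peval F (e0(i := eb i)) H) = (\<Oplus>\<^bsub>R\<^esub>i\<in>Vb. w (cl i))"
  proof (rule R.finsum_cong')
    fix i assume "i \<in> Vb"
    then have "e0(i := eb i) = (\<lambda>_. lo)(i := hi)" unfolding e0_def eb_def Vb_def by auto
    then show "peval F (e0(i := eb i)) H = w (cl i)" unfolding evH w_def cl_def by simp
  qed (use wc in auto)
  have cnt: "{i\<in>Vb. cl i = c} = {i\<in>Vars. b i \<and> cl i = c}" for c unfolding Vb_def by auto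
  have S1': "(\<Oplus>\<^bsub>R\<^esub>i\<in>Vb. w (cl i)) = (\<Oplus>\<^bsub>R\<^esub>c\<in>UNIV. add_pow R (card {i\<in>Vars. b i \<and> cl i = c} mod p) (w c))"
    unfolding count_sum[OF wc finVb] cnt
  proof (rule R.finsum_cong')
    fix c :: 'a
    show "add_pow R (card {i\<in>Vars. b i \<and> cl i = c}) (w c) = add_pow R (card {i\<in>Vars. b i \<and> cl i = c} mod p) (w c)"
      by (rule pow_mod[OF cardU wc[rule_format]])
  qed (use wc in auto)
  have wc0: "\<forall>c. (\<lambda>_. h0) c \<in> carrier R" using h0c by simp
  have S0: "(\<Oplus>\<^bsub>R\<^esub>i\<in>Vb. peval F e0 H) = (\<Oplus>\<^bsub>R\<^esub>c\<in>UNIV. add_pow R (card {i\<in>Vars. b i \<and> cl i = c} mod p) h0)"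
    unfolding h0e count_sum[OF wc0 finVb, of cl] cnt
  proof (rule R.finsum_cong')
    fix c :: 'a
    show "add_pow R (card {i\<in>Vars. b i \<and> cl i = c}) h0 = add_pow R (card {i\<in>Vars. b i \<and> cl i = c} mod p) h0"
      by (rule pow_mod[OF cardU h0c])
  qed (use h0c in auto)
  have "peval F eb H = peval F (\<lambda>_. peval F (\<lambda>i. if i \<in> Vars \<and> b i then hi else lo) t) T"
    unfolding evH eb_def ..
  then show ?thesis using SF S1 S1' S0 h0e by simp
qed

end


context tsetting
begin

lemma key:
  fixes a0 a1 :: 'a and b b' :: "nat \<Rightarrow> bool" and t T0 :: "'a pterm"
  assumes cardU: "card U = p ^ m" and wt: "wf_pterm F n t" and fin: "finite Vars"
    and T0: "wf_pterm F 1 T0" "\<forall>z. peval F (\<lambda>_. z) T0 \<in> U" "peval F (\<lambda>_. c0) T0 \<noteq> peval F (\<lambda>_. d0) T0"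
    and cnt: "\<forall>c. card {i\<in>Vars. b i \<and> peval F ((\<lambda>_. a0)(i := a1)) t = c} mod p
                = card {i\<in>Vars. b' i \<and> peval F ((\<lambda>_. a0)(i := a1)) t = c} mod p"
  shows "peval F (\<lambda>i. if i \<in> Vars \<and> b i then a1 else a0) t = peval F (\<lambda>i. if i \<in> Vars \<and> b' i then a1 else a0) t"
proof (rule ccontr)
  assume ne: "\<not> ?thesis"
  obtain T where wT: "wf_pterm F 1 T" and rT: "\<forall>z. peval F (\<lambda>_. z) T \<in> U"
    and dT: "peval F (\<lambda>_. peval F (\<lambda>i. if i \<in> Vars \<and> b i then a1 else a0) t) T
           \<noteq> peval F (\<lambda>_. peval F (\<lambda>i. if i \<in> Vars \<and> b' i then a1 else a0) t) T"
    using separation[OF simple T0 ne] by blast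
  note e1 = sumform[where lo=a0 and hi=a1 and b=b, OF cardU wt fin wT rT]
  note e2 = sumform[where lo=a0 and hi=a1 and b=b', OF cardU wt fin wT rT]
  define X where "X = peval F (\<lambda>_. peval F (\<lambda>i. if i \<in> Vars \<and> b i then a1 else a0) t) T"
  define X' where "X' = peval F (\<lambda>_. peval F (\<lambda>i. if i \<in> Vars \<and> b' i then a1 else a0) t) T"
  define h0 where "h0 = peval F (\<lambda>_. peval F (\<lambda>_. a0) t) T"
  define Z where "Z = (\<Oplus>\<^bsub>R\<^esub>c\<in>UNIV. add_pow R (card {i\<in>Vars. b i \<and> peval F ((\<lambda>_. a0)(i := a1)) t = c} mod p) h0)"
  define W where "W = (\<Oplus>\<^bsub>R\<^esub>c\<in>UNIV. add_pow R (card {i\<in>Vars. b i \<and> peval F ((\<lambda>_. a0)(i := a1)) t = c} mod p) (peval F (\<lambda>_. c) T))"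
  have E1: "X \<oplus>\<^bsub>R\<^esub> Z = h0 \<oplus>\<^bsub>R\<^esub> W" using e1 unfolding X_def Z_def h0_def W_def .
  have E2: "X' \<oplus>\<^bsub>R\<^esub> Z = h0 \<oplus>\<^bsub>R\<^esub> W" using e2 unfolding X'_def Z_def h0_def W_def cnt[rule_format, symmetric] .
  have c: "X \<in> carrier R" "X' \<in> carrier R" "Z \<in> carrier R" using rT carr unfolding X_def X'_def Z_def h0_def
    by (auto intro: R.finsum_closed)
  have "X \<oplus>\<^bsub>R\<^esub> Z = X' \<oplus>\<^bsub>R\<^esub> Z" using E1 E2 by simp
  then have "X = X'" using c R.add.right_cancel by blast
  then show False using dT unfolding X_def X'_def by simp
qed

end

lemma sum_list_le_bound: "(\<And>x. x \<in> set xs \<Longrightarrow> f x \<le> (B::nat)) \<Longrightarrow> sum_list (map f xs) \<le> length xs * B"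
  by (induction xs) (auto intro!: add_mono)

theorem mainTheorem6:
  fixes F :: "('a::finite) ops" and p :: nat
  assumes "simple_alg F"
    and "tct_type2 F"
    and "prime p"
    and "\<forall>N. is_trace F N \<longrightarrow> (\<exists>m. card N = p ^ m)"
  shows "\<exists>k C :: nat. \<forall>n gs (\<iota> :: bool \<Rightarrow> 'a) S.
           wf_circuit F n gs \<longrightarrow>
           (\<exists>M g. bm_wf k p n M \<and> bm_size M \<le> C * circuit_size gs \<and>
                  (\<forall>b. program_val F gs \<iota> S b = bm_val p M g b))"
proof -
  note simple = assms(1)
  have p0: "p > 0" using assms(3) prime_gt_0_nat by blast
  have card2: "card (UNIV :: 'a set) \<ge> 2" using simple unfolding simple_alg_def by (rule conjunct1)
  obtain xa xb :: 'a where xab: "xa \<noteq> xb"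
  proof -
    have "\<not> (\<forall>x y :: 'a. x = y)"
    proof
      assume "\<forall>x y :: 'a. x = y"
      then have "(UNIV :: 'a set) \<subseteq> {undefined}" by auto
      then have "card (UNIV :: 'a set) \<le> card {undefined :: 'a}" by (rule card_mono[rotated]) simp
      then have "card (UNIV :: 'a set) \<le> 1" by simp
      then show False using card2 by simp
    qed
    then show ?thesis using that by blast
  qed
  define rg where "rg T = range (\<lambda>z. peval F (\<lambda>_::nat. z) T)" for T :: "'a pterm"
  define P where "P T \<longleftrightarrow> wf_pterm F 1 T \<and> (\<exists>a b. peval F (\<lambda>_. a) T \<noteq> peval F (\<lambda>_. b) T)" for T
  have "P (PVar 0)" unfolding P_def using xab by auto
  then obtain T0 where T0: "P T0" and T0min: "\<And>T. P T \<Longrightarrow> card (rg T0) \<le> card (rg T)"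
    using ex_has_least_nat[of P "PVar 0" "\<lambda>T. card (rg T)"] by blast
  define U where "U = rg T0"
  have wT0: "wf_pterm F 1 T0" using T0 P_def by blast
  obtain c0 d0 where cd0: "peval F (\<lambda>_. c0) T0 \<noteq> peval F (\<lambda>_. d0) T0" using T0 P_def by blast
  have rT0: "\<forall>z. peval F (\<lambda>_. z) T0 \<in> U" unfolding U_def rg_def by auto
  have minU: "min_set F U" unfolding min_set_def
  proof (intro conjI allI impI)
    show "\<exists>f. is_upol F f \<and> (\<exists>a b. f a \<noteq> f b) \<and> U = range f"
    proof (intro exI[of _ "\<lambda>z. peval F (\<lambda>_. z) T0"] conjI)
      show "is_upol F (\<lambda>z. peval F (\<lambda>_. z) T0)" unfolding is_upol_def using wT0 by blast
      show "\<exists>a b. peval F (\<lambda>_. a) T0 \<noteq> peval F (\<lambda>_. b) T0" using cd0 by blast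
      show "U = range (\<lambda>z. peval F (\<lambda>_. z) T0)" unfolding U_def rg_def ..
    qed
  next
    fix g assume g: "is_upol F g \<and> (\<exists>a b. g a \<noteq> g b) \<and> range g \<subseteq> U"
    then obtain Tg where Tg: "wf_pterm F 1 Tg" "\<forall>a. g a = peval F (\<lambda>_. a) Tg" unfolding is_upol_def by blast
    have ge: "g = (\<lambda>z. peval F (\<lambda>_. z) Tg)" using Tg by auto
    have "P Tg" unfolding P_def using Tg g by metis
    then have "card U \<le> card (range g)" using T0min unfolding U_def rg_def ge by blast
    moreover have "range g \<subseteq> U" using g by blast
    ultimately show "range g = U" using card_seteq[of U "range g"] by simp
  qed
  have trU: "is_trace F U" unfolding is_trace_def
  proof (intro exI conjI)
    show "min_set F U" by (rule minU)
    show "UNIV \<in> UNIV // (UNIV :: ('a \<times> 'a) set)"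
    proof -
      have "(UNIV :: ('a \<times> 'a) set) `` {xa} = UNIV" by auto
      moreover have "(UNIV :: ('a \<times> 'a) set) `` {xa} \<in> UNIV // UNIV" by (rule quotientI) simp
      ultimately show ?thesis by simp
    qed
    show "U = U \<inter> UNIV" by simp
    show "\<not> U \<times> U \<subseteq> Id" using cd0 rT0 by auto
  qed
  then have ivs: "induced_vector_space F U" using assms(2) unfolding tct_type2_def by blast
  then obtain R :: "'a ring" where fR: "field R" and cR: "carrier R = U"
    and aff: "\<forall>n (g :: 'a list \<Rightarrow> 'a).
        (\<exists>f. is_pol F n f \<and> (\<forall>xs. length xs = n \<and> set xs \<subseteq> U \<longrightarrow> f xs \<in> U) \<and>
             (\<forall>xs. length xs = n \<and> set xs \<subseteq> U \<longrightarrow> g xs = f xs))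
        \<longleftrightarrow>
        (\<exists>c \<in> U. \<exists>lam. (\<forall>i<n. lam i \<in> U) \<and>
             (\<forall>xs. length xs = n \<and> set xs \<subseteq> U \<longrightarrow>
                g xs = c \<oplus>\<^bsub>R\<^esub> (\<Oplus>\<^bsub>R\<^esub>i\<in>{..<n}. lam i \<otimes>\<^bsub>R\<^esub> xs ! i)))"
    unfolding induced_vector_space_def by blast
  obtain m where cardU: "card U = p ^ m" using assms(4) trU by blast
  have TS: "tsetting F U R (peval F (\<lambda>_. c0) T0) (peval F (\<lambda>_. d0) T0)"
    by (rule tsetting.intro[OF simple fR cR aff]) (use rT0 cd0 in auto)
  interpret ts: tsetting F U R "peval F (\<lambda>_. c0) T0" "peval F (\<lambda>_. d0) T0" by (rule TS)
  obtain as :: "'a list" where as: "set as = UNIV" "distinct as"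
    using finite_distinct_list[of "UNIV :: 'a set"] by auto
  define k where "k = length as * p"
  define C where "C = 3 * k + 1"
  show ?thesis
  proof (rule exI[of _ k], rule exI[of _ C], intro allI impI)
    fix n gs and \<iota> :: "bool \<Rightarrow> 'a" and S
    assume wc: "wf_circuit F n gs"
    obtain t where wt: "wf_pterm F n t" and tv: "\<forall>x. circuit_val F gs x = peval F x t"
      using circuit_term[OF wc] by blast
    define a0 where "a0 = \<iota> False"
    define a1 where "a1 = \<iota> True"
    define Vars where "Vars = {i. GIn i \<in> set gs}"
    have VarsInj: "inj_on GIn Vars" by (auto simp: inj_on_def)
    have VarsSub: "GIn ` Vars \<subseteq> set gs" unfolding Vars_def by auto
    have finV: "finite Vars" using finite_imageD[OF finite_subset[OF VarsSub] VarsInj] by simp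
    have cardV: "card Vars \<le> length gs"
      using card_inj_on_le[OF VarsInj VarsSub] card_length[of gs] by simp
    have VarsN: "Vars \<subseteq> {..<n}"
    proof
      fix i assume "i \<in> Vars"
      then obtain kk where "kk < length gs" "gs ! kk = GIn i" unfolding Vars_def by (metis in_set_conv_nth mem_Collect_eq)
      then show "i \<in> {..<n}" using wc unfolding wf_circuit_def by fastforce
    qed
    define cl where "cl i = peval F ((\<lambda>_. a0)(i := a1)) t" for i
    define M where "M = concat (map (\<lambda>c. map (\<lambda>r. ({i\<in>Vars. cl i = c}, {r})) [0..<p]) as)"
    define out where "out b = map (\<lambda>G. mod_gate_val p G b) M" for b
    define g where "g ys \<longleftrightarrow> (\<exists>b. out b = ys \<and> program_val F gs \<iota> S b)" for ys
    have lenM: "length M = k" unfolding M_def k_def by (simp add: length_concat comp_def sum_list_triv)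
    have setM: "set M = {({i\<in>Vars. cl i = c}, {r}) | c r. c \<in> set as \<and> r < p}"
      unfolding M_def by auto
    have wfM: "bm_wf k p n M" unfolding bm_wf_def using lenM setM VarsN by auto
    have sz1: "sum_list (map (\<lambda>G. card (fst G)) M) \<le> length M * length gs"
    proof (rule sum_list_le_bound)
      fix G assume "G \<in> set M"
      then have "fst G \<subseteq> Vars" using setM by auto
      then have "card (fst G) \<le> card Vars" using card_mono finV by blast
      then show "card (fst G) \<le> length gs" using cardV by simp
    qed
    have gne: "gs \<noteq> []" using wc unfolding wf_circuit_def by (rule conjunct1)
    have l2: "length gs \<le> circuit_size gs" unfolding circuit_size_def by simp
    have l1: "1 \<le> circuit_size gs" using l2 gne by (cases gs) auto
    have s1: "sum_list (map (\<lambda>G. card (fst G)) M) \<le> k * length gs" using sz1 lenM by simp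
    have s2: "k * length gs \<le> k * circuit_size gs" by (rule mult_le_mono2[OF l2])
    have "bm_size M \<le> k * circuit_size gs + 2 * k + 1"
      using s1 s2 lenM unfolding bm_size_def by linarith
    also have "\<dots> \<le> C * circuit_size gs"
    proof -
      have "2 * k \<le> 2 * k * circuit_size gs" using l1 by simp
      moreover have "1 \<le> circuit_size gs" by (rule l1)
      moreover have "C * circuit_size gs = k * circuit_size gs + 2 * k * circuit_size gs + circuit_size gs"
        unfolding C_def by (simp add: algebra_simps)
      ultimately show ?thesis by linarith
    qed
    finally have szM: "bm_size M \<le> C * circuit_size gs" .
    have pv: "program_val F gs \<iota> S b \<longleftrightarrow> peval F (\<lambda>i. if i \<in> Vars \<and> b i then a1 else a0) t \<in> S" for b
    proof -
      have "circuit_val F gs (\<lambda>i. \<iota> (b i)) = circuit_val F gs (\<lambda>i. if i \<in> Vars \<and> b i then a1 else a0)"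
        by (rule circuit_dep) (auto simp: Vars_def a0_def a1_def)
      then show ?thesis unfolding program_val_def using tv by simp
    qed
    have keyb: "program_val F gs \<iota> S b \<longleftrightarrow> program_val F gs \<iota> S b'" if "out b = out b'" for b b'
    proof -
      have gates: "mod_gate_val p G b = mod_gate_val p G b'" if "G \<in> set M" for G
        using \<open>out b = out b'\<close> that unfolding out_def by (simp add: map_eq_conv)
      have cnt: "\<forall>c. card {i\<in>Vars. b i \<and> cl i = c} mod p = card {i\<in>Vars. b' i \<and> cl i = c} mod p"
      proof
        fix c :: 'a
        define r where "r = card {i\<in>Vars. b i \<and> cl i = c} mod p"
        have rp: "r < p" unfolding r_def using p0 by simp
        have inM: "({i\<in>Vars. cl i = c}, {r}) \<in> set M" using setM as rp by auto
        have s1: "{i \<in> {i\<in>Vars. cl i = c}. b i} = {i\<in>Vars. b i \<and> cl i = c}" by auto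
        have s2: "{i \<in> {i\<in>Vars. cl i = c}. b' i} = {i\<in>Vars. b' i \<and> cl i = c}" by auto
        have "mod_gate_val p ({i\<in>Vars. cl i = c}, {r}) b" unfolding mod_gate_val_def fst_conv snd_conv s1 r_def by simp
        then have "mod_gate_val p ({i\<in>Vars. cl i = c}, {r}) b'" using gates[OF inM] by simp
        then show "card {i\<in>Vars. b i \<and> cl i = c} mod p = card {i\<in>Vars. b' i \<and> cl i = c} mod p"
          unfolding mod_gate_val_def fst_conv snd_conv s2 r_def by simp
      qed
      have "peval F (\<lambda>i. if i \<in> Vars \<and> b i then a1 else a0) t = peval F (\<lambda>i. if i \<in> Vars \<and> b' i then a1 else a0) t"
        by (rule ts.key[OF cardU wt finV wT0 rT0 cd0]) (use cnt in \<open>simp add: cl_def\<close>)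
      then show ?thesis using pv by simp
    qed
    have corr: "\<forall>b. program_val F gs \<iota> S b = bm_val p M g b"
    proof
      fix b
      show "program_val F gs \<iota> S b = bm_val p M g b"
        unfolding bm_val_def g_def out_def[symmetric] using keyb by blast
    qed
    show "\<exists>M g. bm_wf k p n M \<and> bm_size M \<le> C * circuit_size gs \<and> (\<forall>b. program_val F gs \<iota> S b = bm_val p M g b)"
      using wfM szM corr by blast
  qed
qed


end
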